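(* Setting: $n$ agents on a connected, undirected weighted graph $\mathcal G$ with symmetric adjacency weights $a_{i,j}\ge 0$ ($a_{i,j}>0$ iff $\{i,j\}$ is an edge) and Laplacian $L_n$; let $L=L_n\otimes I_m$. For $i\in\{1,\dots,n\}$, $\Omega_i\subset\mathbb R^{q_i}$ is closed and convex, $f^i$ is strictly convex on an open set containing $\Omega_i$, $W_i\in\mathbb R^{m\times q_i}$, and $d_i\in\mathbb R^m$ with $\sum_{i=1}^n d_i=d_0$. Let $\Omega=\prod_i\Omega_i$, $f(x)=\sum_i f^i(x_i)$, $W=[W_1,\dots,W_n]$, $\overline W=\mathrm{diag}\{W_1,\dots,W_n\}\in\mathbb R^{nm\times\sum_iq_i}$, $d=[d_1^{\rm T},\dots,d_n^{\rm T}]^{\rm T}$, and assume Slater's condition: some $x$ in the interior of $\Omega$ satisfies $Wx=d_0$. Consider the optimization problem $\min f(x)$ subject to $Wx=d_0$, $x\in\Omega$, and the differential inclusion (DPOFA) in $(y,\lambda,z)\in\mathbb R^{\sum_iq_i}\times\mathbb R^{nm}\times\mathbb R^{nm}$: $$\dot y\in\{-y+x-g+\overline W^{\rm T}\lambda:\ g\in\partial f(x)\},\quad \dot\lambda=d-\overline Wx-L\lambda-Lz,\quad \dot z=L\lambda,\quad x=P_\Omega(y).$$ Then: if $(y^*,\lambda^*,z^* )$ is an equilibrium of DPOFA, $x^*=P_\Omega(y^* )$ is a solution of the optimization problem; conversely, if $x^*\in\Omega$ is a solution of the optimization problem, there exists an equilibrium $(y^*,\lambda^*,z^* )$ of DPOFA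 with $x^*=P_\Omega(y^* )$.
   Context: $\partial f$ is the convex subdifferential; $P_\Omega$ is Euclidean projection onto $\Omega$. An equilibrium of the inclusion $\dot\xi\in\mathcal F(\xi)$ is a point $\xi_e$ with $0\in\mathcal F(\xi_e)$; here this means there is $g\in\partial f(x^* )$, $x^*=P_\Omega(y^* )$, with $0=-y^*+x^*-g+\overline W^{\rm T}\lambda^*$, $0=d-\overline Wx^*-Lz^*$, $0=L\lambda^*$. *)

theory Defs
  imports "HOL-Analysis.Analysis"
begin

definition strictly_convex_on :: "'a::real_vector set \<Rightarrow> ('a \<Rightarrow> real) \<Rightarrow> bool" where
  "strictly_convex_on S f \<longleftrightarrow> convex S \<and>
    (\<forall>x\<in>S. \<forall>y\<in>S. x \<noteq> y \<longrightarrow> (\<forall>u>0. \<forall>v>0. u + v = 1 \<longrightarrow>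
        f (u *\<^sub>R x + v *\<^sub>R y) < u * f x + v * f y))"

definition subdiff :: "'a::real_inner set \<Rightarrow> ('a \<Rightarrow> real) \<Rightarrow> 'a \<Rightarrow> 'a set" where
  "subdiff D f x = {g. \<forall>z\<in>D. f z \<ge> f x + inner g (z - x)}"

(* Global decision vector x in R^(q_1+...+q_n): coordinates of type 'q, the coordinate k
   belongs to agent blk k.  R^(q_i) is identified with the coordinate subspace of block i. *)
definition blocksub :: "('q \<Rightarrow> 'n) \<Rightarrow> 'n \<Rightarrow> (real^'q::finite) set" where
  "blocksub blk i = {x. \<forall>k. blk k \<noteq> i \<longrightarrow> x $ k = 0}"

definition blockproj :: "('q \<Rightarrow> 'n) \<Rightarrow> 'n \<Rightarrow> real^'q::finite \<Rightarrow> real^'q" where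
  "blockproj blk i x = (\<chi> k. if blk k = i then x $ k else 0)"

definition prodset :: "('q \<Rightarrow> 'n) \<Rightarrow> ('n \<Rightarrow> (real^'q::finite) set) \<Rightarrow> (real^'q) set" where
  "prodset blk Om = {x. \<forall>i. blockproj blk i x \<in> Om i}"

definition sumfun :: "('q \<Rightarrow> 'n::finite) \<Rightarrow> ('n \<Rightarrow> real^'q::finite \<Rightarrow> real) \<Rightarrow> real^'q \<Rightarrow> real" where
  "sumfun blk fl x = (\<Sum>i\<in>UNIV. fl i (blockproj blk i x))"

definition Wmul :: "('q \<Rightarrow> 'n::finite) \<Rightarrow> ('n \<Rightarrow> real^'q^'m) \<Rightarrow> real^'q::finite \<Rightarrow> real^'m::finite" where
  "Wmul blk Wl x = (\<Sum>i\<in>UNIV. Wl i *v blockproj blk i x)"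

(* Wbar = diag{W_1,...,W_n}, rows indexed by (agent, component) *)
definition Wbar :: "('q \<Rightarrow> 'n::finite) \<Rightarrow> ('n \<Rightarrow> real^'q^'m) \<Rightarrow> real^'q::finite^('n \<times> 'm::finite)" where
  "Wbar blk Wl = (\<chi> p k. if blk k = fst p then Wl (fst p) $ snd p $ k else 0)"

definition stack :: "('n::finite \<Rightarrow> real^'m::finite) \<Rightarrow> real^('n \<times> 'm)" where
  "stack dl = (\<chi> p. dl (fst p) $ snd p)"

definition laplacian :: "real^'n^'n \<Rightarrow> real^'n::finite^'n" where
  "laplacian a = (\<chi> i j. if i = j then (\<Sum>k\<in>UNIV - {i}. a $ i $ k) else - a $ i $ j)"

definition kron_id :: "real^'n^'n \<Rightarrow> real^('n::finite \<times> 'm::finite)^('n \<times> 'm)" where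
  "kron_id Lap = (\<chi> p p'. Lap $ fst p $ fst p' * (if snd p = snd p' then 1 else 0))"

definition connected_graph :: "real^'n^'n \<Rightarrow> bool" where
  "connected_graph a \<longleftrightarrow> (\<forall>i j. (i, j) \<in> {(u, v). u \<noteq> v \<and> a $ u $ v > 0}\<^sup>*)"

end

theory Submission
  imports Defs
begin
lemma bp_linear: "linear (blockproj blk i)"
  by (rule linearI) (auto simp: blockproj_def vec_eq_iff)

lemma bp_add: "blockproj blk i (x + y) = blockproj blk i x + blockproj blk i y"
  and bp_scale: "blockproj blk i (c *\<^sub>R x) = c *\<^sub>R blockproj blk i x"
  and bp_diff: "blockproj blk i (x - y) = blockproj blk i x - blockproj blk i y"
  by (auto simp: blockproj_def vec_eq_iff)

lemma bp_in_blocksub: "blockproj blk i x \<in> blocksub blk i"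
  by (simp add: blockproj_def blocksub_def)

lemma W_linear: "linear (Wmul blk Wl)"
  by (rule linearI) (simp_all add: Wmul_def bp_add bp_scale matrix_vector_right_distrib sum.distrib
      scaleR_sum_right matrix_vector_mult_def vec_eq_iff sum_distrib_left algebra_simps)

lemma bp_cont: "continuous (at x) (blockproj blk i)"
  by (rule linear_continuous_at) (metis bp_linear linear_conv_bounded_linear)

lemma prodset_eq: "prodset blk S = (\<Inter>i. blockproj blk i -` S i)"
  by (auto simp: prodset_def)

lemma prodset_closed: "\<forall>i. closed (S i) \<Longrightarrow> closed (prodset blk S)"
  unfolding prodset_eq by (intro closed_INT ballI continuous_closed_vimage bp_cont) auto

lemma prodset_open: "\<forall>i. open (S i) \<Longrightarrow> open (prodset blk (S::'n::finite \<Rightarrow> _))"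
  unfolding prodset_eq by (intro open_INT ballI continuous_open_vimage bp_cont) auto

lemma prodset_convex: "\<forall>i. convex (S i) \<Longrightarrow> convex (prodset blk S)"
  unfolding convex_def prodset_def by (auto simp: bp_add bp_scale)

lemma WB_comp: "(Wbar blk Wl *v x) $ (i,m) = (Wl i *v blockproj blk i x) $ m"
  by (auto simp: Wbar_def matrix_vector_mult_def blockproj_def intro!: sum.cong)

definition bsum :: "real^('n::finite \<times> 'm::finite) \<Rightarrow> real^'m" where
  "bsum u = (\<chi> m. \<Sum>i\<in>UNIV. u $ (i,m))"

lemma bsum_WB: "bsum (Wbar blk Wl *v x) = Wmul blk Wl x"
  by (simp add: bsum_def WB_comp Wmul_def vec_eq_iff)

lemma bsum_stack: "bsum (stack dl) = sum dl UNIV"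
  by (simp add: bsum_def stack_def vec_eq_iff)

lemma bsum_diff: "bsum (u - v) = bsum u - bsum v" and bsum_add: "bsum (u + v) = bsum u + bsum v"
  and bsum_zero: "bsum 0 = 0"
  by (simp_all add: bsum_def vec_eq_iff sum_subtractf sum.distrib)

lemma kron_comp: "(kron_id Lap *v z) $ (i,m) = (\<Sum>j\<in>UNIV. Lap $ i $ j * z $ (j,m))"
proof -
  have "(kron_id Lap *v z) $ (i,m) = (\<Sum>p\<in>UNIV. Lap$i$fst p * (if m = snd p then 1 else 0) * z$p)"
    by (simp add: matrix_vector_mult_def kron_id_def)
  also have "\<dots> = (\<Sum>j\<in>UNIV. \<Sum>m'\<in>UNIV. Lap$i$j * (if m = m' then 1 else 0) * z$(j,m'))"
    unfolding sum.cartesian_product UNIV_Times_UNIV by (simp add: case_prod_beta)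
  also have "\<dots> = (\<Sum>j\<in>UNIV. Lap $ i $ j * z $ (j,m))"
  proof (rule sum.cong)
    fix j
    have "(\<Sum>m'\<in>UNIV. Lap$i$j * (if m = m' then 1 else 0) * z$(j,m'))
        = (\<Sum>m'\<in>UNIV. if m = m' then Lap$i$j * z$(j,m') else 0)"
      by (rule sum.cong) auto
    also have "\<dots> = Lap $ i $ j * z $ (j,m)" by (simp add: sum.delta)
    finally show "(\<Sum>m'\<in>UNIV. Lap$i$j * (if m = m' then 1 else 0) * z$(j,m')) = Lap $ i $ j * z $ (j,m)" .
  qed simp
  finally show ?thesis .
qed

lemma lap_comp: "(\<Sum>j\<in>UNIV. laplacian a $ i $ j * mu j) = (\<Sum>j\<in>UNIV-{i}. a$i$j * (mu i - mu j))"
proof -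
  have "(\<Sum>j\<in>UNIV. laplacian a $ i $ j * mu j)
      = laplacian a $ i $ i * mu i + (\<Sum>j\<in>UNIV-{i}. laplacian a $ i $ j * mu j)"
    by (simp add: sum.remove[of UNIV i])
  also have "\<dots> = (\<Sum>k\<in>UNIV-{i}. a$i$k) * mu i - (\<Sum>j\<in>UNIV-{i}. a $ i $ j * mu j)"
    by (simp add: laplacian_def sum_negf)
  also have "\<dots> = (\<Sum>j\<in>UNIV-{i}. a$i$j * (mu i - mu j))"
    by (simp add: sum_distrib_right right_diff_distrib sum_subtractf)
  finally show ?thesis .
qed

lemma lap_sym: "\<forall>i j. a$i$j = a$j$i \<Longrightarrow> laplacian a $ i $ j = laplacian a $ j $ i"
  by (simp add: laplacian_def)

lemma lap_rowsum: "(\<Sum>j\<in>UNIV. laplacian a $ i $ j) = 0"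
  using lap_comp[of a i "\<lambda>_. 1"] by simp

lemma lap_colsum: "\<forall>i j. a$i$j = a$j$i \<Longrightarrow> (\<Sum>i\<in>UNIV. laplacian a $ i $ j) = 0"
  using lap_rowsum[of a j] lap_sym[of a] by simp

lemma L_transpose: "\<forall>i j. a$i$j = a$j$i \<Longrightarrow> transpose (kron_id (laplacian a)) = kron_id (laplacian a)"
  using lap_sym[of a] by (auto simp: transpose_def kron_id_def vec_eq_iff)

lemma bsum_L: assumes "\<forall>i j. a$i$j = a$j$i" shows "bsum (kron_id (laplacian a) *v z) = 0"
proof -
  have "(\<Sum>i\<in>UNIV. \<Sum>j\<in>UNIV. laplacian a $ i $ j * z $ (j, m)) = 0" for m
  proof -
    have "(\<Sum>i\<in>UNIV. \<Sum>j\<in>UNIV. laplacian a $ i $ j * z $ (j, m))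
        = (\<Sum>j\<in>UNIV. (\<Sum>i\<in>UNIV. laplacian a $ i $ j) * z $ (j, m))"
      by (subst sum.swap) (simp add: sum_distrib_right)
    also have "\<dots> = 0" using lap_colsum[OF assms] by simp
    finally show ?thesis .
  qed
  then show ?thesis by (simp add: bsum_def vec_eq_iff kron_comp)
qed

lemma L_stack_const: "kron_id (laplacian a) *v stack (\<lambda>_. c) = 0"
proof -
  have "(\<Sum>j\<in>UNIV. laplacian a $ i $ j * c $ m) = 0" for i m
    using lap_rowsum[of a i] by (simp add: sum_distrib_right[symmetric])
  then show ?thesis by (simp add: vec_eq_iff split_paired_All kron_comp stack_def)
qed

lemma inner_stack_const: "inner (stack (\<lambda>_. c)) u = inner c (bsum u)"
proof -
  have "inner (stack (\<lambda>_. c)) u = (\<Sum>p\<in>UNIV. c $ snd p * u $ p)"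
    by (simp add: inner_vec_def stack_def)
  also have "\<dots> = (\<Sum>i\<in>UNIV. \<Sum>m\<in>UNIV. c $ m * u $ (i,m))"
    unfolding sum.cartesian_product UNIV_Times_UNIV by (simp add: case_prod_beta)
  also have "\<dots> = (\<Sum>m\<in>UNIV. c $ m * (\<Sum>i\<in>UNIV. u $ (i,m)))"
    by (subst sum.swap) (simp add: sum_distrib_left)
  also have "\<dots> = inner c (bsum u)" by (simp add: inner_vec_def bsum_def)
  finally show ?thesis .
qed

lemma inner_transpose: "inner (transpose A *v x) y = inner x (A *v (y::real^_))"
  by (simp add: dot_lmul_matrix)

lemma consensus:
  fixes a :: "real^'n::finite^'n"
  assumes nonneg: "\<forall>i j. a$i$j \<ge> 0" and conn: "connected_graph a"
    and h: "\<forall>i. (\<Sum>j\<in>UNIV. laplacian a $ i $ j * mu j) = 0"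
  shows "mu i = mu j"
proof -
  define M where "M = Max (range mu)"
  have le: "mu k \<le> M" for k unfolding M_def by (rule Max_ge) auto
  have "M \<in> range mu" unfolding M_def by (rule Max_in) auto
  then obtain i0 where i0: "mu i0 = M" by auto
  have step: "mu v = M" if "mu u = M" "u \<noteq> v" "a$u$v > 0" for u v
  proof -
    have s0: "(\<Sum>j\<in>UNIV-{u}. a$u$j * (mu u - mu j)) = 0" using h lap_comp[of a u mu] by simp
    have nn: "\<forall>j\<in>UNIV-{u}. 0 \<le> a$u$j * (mu u - mu j)"
      using nonneg le that(1) by (simp add: mult_nonneg_nonneg)
    have "a$u$v * (mu u - mu v) = 0"
      using sum_nonneg_eq_0_iff[of "UNIV-{u}" "\<lambda>j. a$u$j * (mu u - mu j)"] s0 nn that(2) by auto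
    with that show ?thesis by simp
  qed
  have all: "mu k = M" for k
  proof -
    have "(i0, k) \<in> {(u, v). u \<noteq> v \<and> a $ u $ v > 0}\<^sup>*" using conn by (simp add: connected_graph_def)
    then show ?thesis
      by (induct rule: rtrancl_induct) (use i0 step in auto)
  qed
  show ?thesis using all[of i] all[of j] by simp
qed

lemma L_kernel:
  fixes a :: "real^'n::finite^'n"
  assumes "\<forall>i j. a$i$j \<ge> 0" "connected_graph a" "kron_id (laplacian a) *v lam = (0::real^('n\<times>'m::finite))"
  shows "lam $ (i,m) = lam $ (j,m)"
proof -
  have "\<forall>i. (\<Sum>j\<in>UNIV. laplacian a $ i $ j * lam $ (j,m)) = 0"
  proof
    fix i'
    have "(kron_id (laplacian a) *v lam) $ (i',m) = 0" using assms(3) by simp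
    then show "(\<Sum>j\<in>UNIV. laplacian a $ i' $ j * lam $ (j,m)) = 0" by (simp only: kron_comp)
  qed
  then show ?thesis using consensus[OF assms(1,2), of "\<lambda>j. lam$(j,m)"] by blast
qed

lemma W_adj: "inner mu (Wmul blk Wl v) = inner (transpose (Wbar blk Wl) *v stack (\<lambda>_. mu)) v"
  by (simp only: inner_transpose inner_stack_const bsum_WB)

lemma L_range:
  fixes a :: "real^'n::finite^'n" and u :: "real^('n\<times>'m::finite)"
  assumes sym: "\<forall>i j. a$i$j = a$j$i" and nonneg: "\<forall>i j. a$i$j \<ge> 0" and conn: "connected_graph a"
    and u0: "bsum u = 0"
  shows "\<exists>z. kron_id (laplacian a) *v z = u"
proof -
  let ?L = "kron_id (laplacian a)"
  let ?R = "range (\<lambda>z. ?L *v z)"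
  obtain y q where y: "y \<in> span ?R" and q: "\<And>w. w \<in> span ?R \<Longrightarrow> orthogonal q w" and u: "u = y + q"
    using orthogonal_subspace_decomp_exists[of ?R u] by blast
  have sp: "span ?R = ?R"
    using linear_subspace_image[OF matrix_vector_mul_linear subspace_UNIV, of ?L] by (simp add: span_eq_iff)
  have adj: "inner q (?L *v w) = inner (?L *v q) w" for w
    using inner_transpose[of ?L q w] by (simp only: L_transpose[OF sym])
  have "inner q (?L *v (?L *v q)) = 0"
  proof -
    have "?L *v (?L *v q) \<in> span ?R" by (rule span_base) auto
    then show ?thesis using q by (auto simp: orthogonal_def)
  qed
  then have Lq: "?L *v q = 0" using adj[of "?L *v q"] by simp
  define c where "c = (\<chi> m. q $ (undefined, m))"
  have qc: "q = stack (\<lambda>_. c)"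
    using L_kernel[OF nonneg conn Lq] by (simp add: vec_eq_iff split_paired_All stack_def c_def)
  have qy: "inner q y = 0" using q[OF y] by (simp add: orthogonal_def)
  have "inner q q = inner q u - inner q y" using u by (simp add: inner_add_right)
  also have "\<dots> = 0" using qy u0 qc inner_stack_const[of c u] by simp
  finally have "q = 0" by simp
  then have "u \<in> span ?R" using u y by simp
  then have "u \<in> ?R" using sp by blast
  then show ?thesis by auto
qed

lemma step1:
  fixes f :: "'a::euclidean_space \<Rightarrow> real"
  assumes oD: "open D" and cD: "convex D"
    and fconv: "\<And>x y u v. x \<in> D \<Longrightarrow> y \<in> D \<Longrightarrow> 0 \<le> u \<Longrightarrow> 0 \<le> v \<Longrightarrow> u + v = 1 \<Longrightarrow>
                 f (u *\<^sub>R x + v *\<^sub>R y) \<le> u * f x + v * f y"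
    and cK: "convex K" and KD: "K \<subseteq> D" and xsK: "xs \<in> K" and opt: "\<forall>x\<in>K. f xs \<le> f x"
  shows "\<exists>g. (\<forall>z\<in>D. f z \<ge> f xs + inner g (z - xs)) \<and> (\<forall>x\<in>K. inner g (x - xs) \<ge> 0)"
proof -
  define A where "A = {(x, t). x \<in> D \<and> f x \<le> t}"
  define B where "B = {(x, t). x \<in> K \<and> t < f xs}"
  have xsD: "xs \<in> D" using xsK KD by auto
  have cA: "convex A"
    unfolding convex_def
  proof (intro ballI allI impI)
    fix p1 p2 and u v :: real
    assume p: "p1 \<in> A" "p2 \<in> A" and uv: "0 \<le> u" "0 \<le> v" "u + v = 1"
    obtain x1 t1 where 1: "p1 = (x1, t1)" "x1 \<in> D" "f x1 \<le> t1" using p(1) unfolding A_def by auto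
    obtain x2 t2 where 2: "p2 = (x2, t2)" "x2 \<in> D" "f x2 \<le> t2" using p(2) unfolding A_def by auto
    have "u *\<^sub>R x1 + v *\<^sub>R x2 \<in> D" using cD 1(2) 2(2) uv unfolding convex_def by blast
    moreover have "f (u *\<^sub>R x1 + v *\<^sub>R x2) \<le> u * t1 + v * t2"
      using fconv[OF 1(2) 2(2) uv] 1(3) 2(3) uv mult_left_mono[of _ _ u] mult_left_mono[of _ _ v]
      by (smt (verit, best))
    ultimately show "u *\<^sub>R p1 + v *\<^sub>R p2 \<in> A" unfolding A_def 1(1) 2(1) by simp
  qed
  have cB: "convex B"
    unfolding convex_def
  proof (intro ballI allI impI)
    fix p1 p2 and u v :: real
    assume p: "p1 \<in> B" "p2 \<in> B" and uv: "0 \<le> u" "0 \<le> v" "u + v = 1"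
    obtain x1 t1 where 1: "p1 = (x1, t1)" "x1 \<in> K" "t1 < f xs" using p(1) unfolding B_def by auto
    obtain x2 t2 where 2: "p2 = (x2, t2)" "x2 \<in> K" "t2 < f xs" using p(2) unfolding B_def by auto
    have "u *\<^sub>R x1 + v *\<^sub>R x2 \<in> K" using cK 1(2) 2(2) uv unfolding convex_def by blast
    moreover have "u * t1 + v * t2 < f xs"
    proof (cases "u = 0")
      case True then show ?thesis using uv 2(3) by simp
    next
      case False
      then have "u * t1 < u * f xs" using uv 1(3) by simp
      moreover have "v * t2 \<le> v * f xs" using uv 2(3) by (simp add: mult_left_mono)
      ultimately show ?thesis using uv by (simp add: algebra_simps) (metis distrib_right mult_1 add_less_le_mono)
    qed
    ultimately show "u *\<^sub>R p1 + v *\<^sub>R p2 \<in> B" unfolding B_def 1(1) 2(1) by simp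
  qed
  have "A \<noteq> {}" using xsD unfolding A_def by auto
  moreover have "B \<noteq> {}" using xsK unfolding B_def by (auto intro!: exI[of _ "f xs - 1"])
  moreover have "A \<inter> B = {}" using opt unfolding A_def B_def by fastforce
  ultimately obtain a' b where ab: "a' \<noteq> 0" "\<forall>p\<in>A. inner a' p \<le> b" "\<forall>p\<in>B. inner a' p \<ge> b"
    using separating_hyperplane_sets[OF cA cB] by blast
  obtain a c where ac: "a' = (a, c)" by (cases a')
  have hA: "inner a x + c * t \<le> b" if "x \<in> D" "f x \<le> t" for x t
    using ab(2) that unfolding A_def ac by auto
  have hB: "inner a x + c * t \<ge> b" if "x \<in> K" "t < f xs" for x t
    using ab(3) that unfolding B_def ac by auto
  have c0: "c \<le> 0"
  proof (rule ccontr)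
    assume "\<not> c \<le> 0" then have cp: "c > 0" by simp
    define t where "t = max (f xs) ((b - inner a xs) / c + 1)"
    have "c * t \<ge> c * ((b - inner a xs) / c + 1)" using cp by (simp add: t_def mult_left_mono)
    also have "c * ((b - inner a xs) / c + 1) = b - inner a xs + c" using cp by (simp add: field_simps)
    finally have "inner a xs + c * t > b" using cp by simp
    moreover have "inner a xs + c * t \<le> b" using hA[OF xsD] by (simp add: t_def)
    ultimately show False by simp
  qed
  have cne: "c \<noteq> 0"
  proof
    assume c: "c = 0"
    then have a0: "a \<noteq> 0" using ab(1) ac by (simp add: zero_prod_def)
    have hA': "inner a x \<le> b" if "x \<in> D" for x using hA[OF that order_refl] c by simp
    have "inner a xs \<ge> b" using hB[OF xsK, of "f xs - 1"] c by simp
    obtain r where r: "r > 0" "ball xs r \<subseteq> D" using oD xsD by (meson open_contains_ball)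
    define x where "x = xs + (r / 2 / norm a) *\<^sub>R a"
    have "dist xs x < r" using r a0 by (simp add: x_def dist_norm)
    then have "x \<in> D" using r by auto
    moreover have "inner a x = inner a xs + (r / 2 / norm a) * inner a a" by (simp add: x_def inner_add_right)
    moreover have "(r / 2 / norm a) * inner a a > 0" using r a0 by simp
    ultimately show False using hA' \<open>inner a xs \<ge> b\<close> by fastforce
  qed
  then have cn: "c < 0" using c0 by simp
  have hK: "inner a x + c * f xs \<ge> b" if "x \<in> K" for x
  proof -
    have "- (inner a x + c * f xs) \<le> - b"
    proof (rule field_le_epsilon)
      fix e :: real assume e: "e > 0"
      have "e / c < 0" using e cn by (simp add: divide_pos_neg)
      then have "inner a x + c * (f xs + e / c) \<ge> b" by (intro hB[OF that]) simp
      then show "- (inner a x + c * f xs) \<le> - b + e" using cn by (simp add: distrib_left)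
    qed
    then show ?thesis by simp
  qed
  have hxs: "inner a xs + c * f xs \<le> b" using hA[OF xsD order_refl] .
  define g where "g = (- 1 / c) *\<^sub>R a"
  show ?thesis
  proof (intro exI conjI ballI)
    fix z assume z: "z \<in> D"
    have key: "inner a z + c * f z \<le> inner a xs + c * f xs" using hA[OF z order_refl] hK[OF xsK] by simp
    have "inner g (z - xs) = (inner a z - inner a xs) / (- c)" by (simp add: g_def inner_diff_right diff_divide_distrib)
    also have "\<dots> \<le> f z - f xs"
    proof -
      have k2: "inner a z - inner a xs \<le> (f xs - f z) * c" using key by (simp add: algebra_simps)
      have "f xs - f z \<le> (inner a z - inner a xs) / c"
        by (subst neg_le_divide_eq[OF cn]) (rule k2)
      then show ?thesis by (simp add: divide_minus_right)
    qed
    finally show "f xs + inner g (z - xs) \<le> f z" by simp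
  next
    fix x assume x: "x \<in> K"
    have "inner a x - inner a xs \<ge> 0" using hK[OF x] hxs by simp
    then show "inner g (x - xs) \<ge> 0" using cn by (simp add: g_def inner_diff_right divide_right_mono_neg)
  qed
qed

lemma step2:
  fixes W :: "'a::euclidean_space \<Rightarrow> 'b::euclidean_space" and Wt :: "'b \<Rightarrow> 'a"
  assumes lin: "linear W" and adj: "\<And>mu v. inner mu (W v) = inner (Wt mu) v"
    and cO: "convex Ob" and xsO: "xs \<in> Ob" and x0: "x0 \<in> interior Ob" and Wx0: "W x0 = W xs"
    and hg: "\<forall>x\<in>Ob. W x = W xs \<longrightarrow> inner g (x - xs) \<ge> 0"
  shows "\<exists>lam. \<forall>x\<in>Ob. inner (g - Wt lam) (x - xs) \<ge> 0"
proof -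
  define V where "V = {w. \<forall>v. inner w (W v) = 0}"
  define C where "C = {(W (x - xs) + w, inner g (x - xs) + s) | x w s. x \<in> Ob \<and> w \<in> V \<and> s > 0}"
  have V_sc: "t *\<^sub>R w \<in> V" if "w \<in> V" for t w using that by (simp add: V_def)
  have V_add: "w1 + w2 \<in> V" if "w1 \<in> V" "w2 \<in> V" for w1 w2 using that by (simp add: V_def inner_add_left)
  have "0 \<notin> C"
  proof
    assume "0 \<in> C"
    then obtain x w s where x: "x \<in> Ob" "w \<in> V" "s > 0" and e1: "W (x - xs) + w = 0"
        and e2: "inner g (x - xs) + s = 0"
      unfolding C_def by (auto simp: zero_prod_def)
    have "inner w (W (x - xs) + w) = 0" using e1 by simp
    then have "inner w w = 0" using x(2) by (simp add: V_def inner_add_right)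
    then have "w = 0" by simp
    then have "W x = W xs" using e1 lin by (simp add: linear_diff)
    then have "inner g (x - xs) \<ge> 0" using hg x(1) by blast
    then show False using e2 x(3) by linarith
  qed
  moreover have "convex C"
    unfolding convex_def
  proof (intro ballI allI impI)
    fix p1 p2 and u v :: real
    assume p: "p1 \<in> C" "p2 \<in> C" and uv: "0 \<le> u" "0 \<le> v" "u + v = 1"
    obtain x1 w1 s1 where 1: "p1 = (W (x1 - xs) + w1, inner g (x1 - xs) + s1)" "x1 \<in> Ob" "w1 \<in> V" "s1 > 0"
      using p(1) unfolding C_def by blast
    obtain x2 w2 s2 where 2: "p2 = (W (x2 - xs) + w2, inner g (x2 - xs) + s2)" "x2 \<in> Ob" "w2 \<in> V" "s2 > 0"
      using p(2) unfolding C_def by blast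
    let ?x = "u *\<^sub>R x1 + v *\<^sub>R x2"
    have xO: "?x \<in> Ob" using cO 1(2) 2(2) uv unfolding convex_def by blast
    have xd: "?x - xs = u *\<^sub>R (x1 - xs) + v *\<^sub>R (x2 - xs)"
      using uv by (simp add: algebra_simps flip: scaleR_add_left)
    have "u *\<^sub>R p1 + v *\<^sub>R p2 = (W (?x - xs) + (u *\<^sub>R w1 + v *\<^sub>R w2), inner g (?x - xs) + (u * s1 + v * s2))"
    proof -
      have wx: "W (?x - xs) = u *\<^sub>R W (x1 - xs) + v *\<^sub>R W (x2 - xs)"
        unfolding xd using lin by (simp add: linear_add linear_scale)
      have gx: "inner g (?x - xs) = u * inner g (x1 - xs) + v * inner g (x2 - xs)"
        unfolding xd by (simp add: inner_add_right)
      show ?thesis unfolding 1(1) 2(1) wx gx by (simp add: algebra_simps)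
    qed
    moreover have "u * s1 + v * s2 > 0"
    proof (cases "u = 0")
      case True then show ?thesis using uv 2(4) by simp
    next
      case False then have "u * s1 > 0" using uv 1(4) by simp
      moreover have "v * s2 \<ge> 0" using uv 2(4) by simp
      ultimately show ?thesis by linarith
    qed
    moreover have "u *\<^sub>R w1 + v *\<^sub>R w2 \<in> V" using V_sc V_add 1(3) 2(3) by blast
    ultimately show "u *\<^sub>R p1 + v *\<^sub>R p2 \<in> C" unfolding C_def using xO by blast
  qed
  ultimately obtain a where a: "a \<noteq> 0" "\<forall>p\<in>C. 0 \<le> inner a p"
    using separating_hyperplane_set_0 by blast
  obtain mu c where ac: "a = (mu, c)" by (cases a)
  have h: "0 \<le> inner mu (W (x - xs) + w) + c * (inner g (x - xs) + s)"
    if "x \<in> Ob" "w \<in> V" "s > 0" for x w s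
  proof -
    have "(W (x - xs) + w, inner g (x - xs) + s) \<in> C" unfolding C_def using that by blast
    then show ?thesis using a(2) ac by fastforce
  qed
  have W0: "W 0 = 0" using lin by (rule linear_0)
  have V0: "0 \<in> V" by (simp add: V_def)
  have c0: "c \<ge> 0" using h[OF xsO V0, of 1] W0 by simp
  have muV: "inner mu w = 0" if "w \<in> V" for w
  proof (rule ccontr)
    assume ne: "inner mu w \<noteq> 0"
    define t where "t = - (c + 1) / inner mu w"
    have "0 \<le> inner mu (t *\<^sub>R w) + c" using h[OF xsO V_sc[OF that, of t], of 1] W0 by simp
    moreover have "inner mu (t *\<^sub>R w) = - (c + 1)" using ne by (simp add: t_def)
    ultimately show False by simp
  qed
  have h2: "0 \<le> inner mu (W (x - xs)) + c * inner g (x - xs)" if "x \<in> Ob" for x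
  proof (cases "c = 0")
    case True then show ?thesis using h[OF that V0, of 1] by simp
  next
    case False
    then have cp: "c > 0" using c0 by simp
    show ?thesis
    proof (rule field_le_epsilon)
      fix e :: real assume "e > 0"
      then have "0 \<le> inner mu (W (x - xs) + 0) + c * (inner g (x - xs) + e / c)"
        using h[OF that V0, of "e / c"] cp by simp
      then show "0 \<le> inner mu (W (x - xs)) + c * inner g (x - xs) + e"
        using cp by (simp add: distrib_left)
    qed
  qed
  have cne: "c \<noteq> 0"
  proof
    assume c: "c = 0"
    then have mu0: "mu \<noteq> 0" using a(1) ac by (simp add: zero_prod_def)
    have hw: "0 \<le> inner mu (W (x - xs))" if "x \<in> Ob" for x using h2[OF that] c by simp
    obtain r where r: "r > 0" "ball x0 r \<subseteq> Ob" using x0 by (meson mem_interior)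
    have Wt0: "Wt mu = 0"
    proof (rule ccontr)
      assume vne: "Wt mu \<noteq> 0"
      define k where "k = r / 2 / norm (Wt mu)"
      have kp: "k > 0" using r vne by (simp add: k_def)
      define x where "x = x0 - k *\<^sub>R Wt mu"
      have "dist x0 x < r" using r vne by (simp add: x_def dist_norm k_def)
      then have xO: "x \<in> Ob" using r by auto
      have "x - xs = (x0 - xs) - k *\<^sub>R Wt mu" by (simp add: x_def)
      then have "W (x - xs) = - (k *\<^sub>R W (Wt mu))" using lin Wx0 by (simp add: linear_diff linear_scale)
      then have "inner mu (W (x - xs)) = - k * inner (Wt mu) (Wt mu)" by (simp add: adj)
      moreover have "inner (Wt mu) (Wt mu) > 0" using vne by simp
      ultimately have "inner mu (W (x - xs)) < 0" using kp by (simp add: mult_pos_pos)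
      then show False using hw[OF xO] by simp
    qed
    then have "mu \<in> V" by (simp add: V_def adj)
    then have "inner mu mu = 0" by (rule muV)
    then show False using mu0 by simp
  qed
  then have cp: "c > 0" using c0 by simp
  show ?thesis
  proof (intro exI ballI)
    fix x assume x: "x \<in> Ob"
    have "inner (g - Wt ((- 1 / c) *\<^sub>R mu)) (x - xs) = inner g (x - xs) + (1 / c) * inner mu (W (x - xs))"
      by (simp add: inner_diff_left adj[symmetric])
    also have "\<dots> = (1 / c) * (inner mu (W (x - xs)) + c * inner g (x - xs))"
      using cp by (simp add: field_simps)
    also have "\<dots> \<ge> 0" using h2[OF x] cp by simp
    finally show "0 \<le> inner (g - Wt ((- 1 / c) *\<^sub>R mu)) (x - xs)" .
  qed
qed

lemma f_conv:
  assumes fs: "\<forall>i. strictly_convex_on (U i \<inter> blocksub blk i) (fl i)"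
    and x: "x \<in> prodset blk (\<lambda>i. U i \<inter> blocksub blk i)" and y: "y \<in> prodset blk (\<lambda>i. U i \<inter> blocksub blk i)"
    and uv: "0 \<le> u" "0 \<le> v" "u + v = 1"
  shows "sumfun blk fl (u *\<^sub>R x + v *\<^sub>R y) \<le> u * sumfun blk fl x + v * sumfun blk fl y"
proof -
  have each: "fl i (u *\<^sub>R blockproj blk i x + v *\<^sub>R blockproj blk i y)
      \<le> u * fl i (blockproj blk i x) + v * fl i (blockproj blk i y)" for i
  proof -
    let ?p = "blockproj blk i x" and ?q = "blockproj blk i y"
    have pq: "?p \<in> U i \<inter> blocksub blk i" "?q \<in> U i \<inter> blocksub blk i"
      using x y by (auto simp: prodset_def)
    show ?thesis
    proof (cases "?p = ?q")
      case True
      then have "u *\<^sub>R ?p + v *\<^sub>R ?q = ?p" using uv by (simp flip: scaleR_add_left)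
      then show ?thesis using True uv by (simp flip: distrib_right)
    next
      case False
      show ?thesis
      proof (cases "u = 0")
        case True then show ?thesis using uv by simp
      next
        case u: False
        show ?thesis
        proof (cases "v = 0")
          case True then show ?thesis using uv by simp
        next
          case v: False
          have "u > 0" "v > 0" using u v uv by auto
          then show ?thesis using fs pq False uv unfolding strictly_convex_on_def
            by (meson less_imp_le)
        qed
      qed
    qed
  qed
  have "sumfun blk fl (u *\<^sub>R x + v *\<^sub>R y)
      = (\<Sum>i\<in>UNIV. fl i (u *\<^sub>R blockproj blk i x + v *\<^sub>R blockproj blk i y))"
    by (simp add: sumfun_def bp_add bp_scale)
  also have "\<dots> \<le> (\<Sum>i\<in>UNIV. u * fl i (blockproj blk i x) + v * fl i (blockproj blk i y))"
    by (rule sum_mono) (rule each)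
  also have "\<dots> = u * sumfun blk fl x + v * sumfun blk fl y"
    by (simp add: sumfun_def sum.distrib sum_distrib_left)
  finally show ?thesis .
qed

lemma D_eq: "prodset blk (\<lambda>i. U i \<inter> blocksub blk i) = prodset blk U"
  by (auto simp: prodset_def bp_in_blocksub)

theorem theorem1:
  fixes blk :: "'q::finite \<Rightarrow> 'n::finite"
    and a :: "real^'n^'n"
    and Om :: "'n \<Rightarrow> (real^'q) set"
    and U :: "'n \<Rightarrow> (real^'q) set"
    and fl :: "'n \<Rightarrow> real^'q \<Rightarrow> real"
    and Wl :: "'n \<Rightarrow> real^'q^'m::finite"
    and dl :: "'n \<Rightarrow> real^'m"
    and d0 :: "real^'m"
  assumes sym: "\<forall>i j. a $ i $ j = a $ j $ i"
    and nonneg: "\<forall>i j. a $ i $ j \<ge> 0"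
    and conn: "connected_graph a"
    and Om_sub: "\<forall>i. Om i \<subseteq> blocksub blk i"
    and Om_closed: "\<forall>i. closed (Om i)"
    and Om_convex: "\<forall>i. convex (Om i)"
    and U_open: "\<forall>i. open (U i)"
    and U_sup: "\<forall>i. Om i \<subseteq> U i"
    and f_strict: "\<forall>i. strictly_convex_on (U i \<inter> blocksub blk i) (fl i)"
    and d0_def: "d0 = (\<Sum>i\<in>UNIV. dl i)"
    and slater: "\<exists>x\<in>interior (prodset blk Om). Wmul blk Wl x = d0"
  shows "let \<Omega> = prodset blk Om; f = sumfun blk fl;
             D = prodset blk (\<lambda>i. U i \<inter> blocksub blk i);
             WB = Wbar blk Wl; d = stack dl; L = kron_id (laplacian a);
             is_sol = (\<lambda>x. x \<in> \<Omega> \<and> Wmul blk Wl x = d0 \<and>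
                         (\<forall>x'\<in>\<Omega>. Wmul blk Wl x' = d0 \<longrightarrow> f x \<le> f x'));
             is_eq = (\<lambda>y lam z. \<exists>g\<in>subdiff D f (closest_point \<Omega> y).
                         0 = - y + closest_point \<Omega> y - g + transpose WB *v lam \<and>
                         0 = d - WB *v closest_point \<Omega> y - L *v lam - L *v z \<and>
                         0 = L *v lam)
         in (\<forall>y lam z. is_eq y lam z \<longrightarrow> is_sol (closest_point \<Omega> y)) \<and>
            (\<forall>xs. is_sol xs \<longrightarrow> (\<exists>y lam z. is_eq y lam z \<and> xs = closest_point \<Omega> y))"
proof -
  let ?\<Omega> = "prodset blk Om" and ?f = "sumfun blk fl"
    and ?D = "prodset blk (\<lambda>i. U i \<inter> blocksub blk i)"
    and ?WB = "Wbar blk Wl" and ?d = "stack dl" and ?L = "kron_id (laplacian a)"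
    and ?W = "Wmul blk Wl"
  have cO: "convex ?\<Omega>" using Om_convex by (rule prodset_convex)
  have clO: "closed ?\<Omega>" using Om_closed by (rule prodset_closed)
  obtain x0 where x0: "x0 \<in> interior ?\<Omega>" "?W x0 = d0" using slater by blast
  have neO: "?\<Omega> \<noteq> {}" using x0(1) interior_subset by blast
  have oD: "open ?D" unfolding D_eq using U_open by (rule prodset_open)
  have cD: "convex ?D" using f_strict by (intro prodset_convex) (auto simp: strictly_convex_on_def)
  have OD: "?\<Omega> \<subseteq> ?D" using Om_sub U_sup by (auto simp: prodset_def) blast+
  have Wlin: "linear ?W" by (rule W_linear)
  have part1: "?f (closest_point ?\<Omega> y) \<le> ?f x' \<and> closest_point ?\<Omega> y \<in> ?\<Omega> \<and> ?W (closest_point ?\<Omega> y) = d0"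
    if g: "g \<in> subdiff ?D ?f (closest_point ?\<Omega> y)"
      and e1: "0 = - y + closest_point ?\<Omega> y - g + transpose ?WB *v lam"
      and e2: "0 = ?d - ?WB *v closest_point ?\<Omega> y - ?L *v lam - ?L *v z"
      and e3: "0 = ?L *v lam"
      and x': "x' \<in> ?\<Omega>" "?W x' = d0"
    for y lam z g x'
  proof -
    let ?x = "closest_point ?\<Omega> y"
    have xO: "?x \<in> ?\<Omega>" using clO neO by (rule closest_point_in_set)
    define c where "c = (\<chi> m. lam $ (undefined, m))"
    have lamc: "lam = stack (\<lambda>_. c)"
      using L_kernel[OF nonneg conn e3[symmetric]] by (simp add: vec_eq_iff split_paired_All stack_def c_def)
    have "bsum (?d - ?WB *v ?x - ?L *v lam - ?L *v z) = 0" using e2[symmetric] by (simp add: bsum_zero)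
    then have Wx: "?W ?x = d0" by (simp add: bsum_diff bsum_L[OF sym] bsum_stack bsum_WB d0_def)
    have "inner (y - ?x) (x' - ?x) \<le> 0" using cO clO x'(1) by (rule closest_point_dot)
    moreover have "y - ?x = - g + transpose ?WB *v lam" using e1 by (simp add: algebra_simps)
    moreover have "inner (transpose ?WB *v lam) (x' - ?x) = 0"
      using W_adj[of c blk Wl "x' - ?x"] Wx x'(2) Wlin by (simp add: lamc linear_diff)
    ultimately have "inner g (x' - ?x) \<ge> 0" by (simp add: inner_add_left inner_diff_left)
    moreover have "?f x' \<ge> ?f ?x + inner g (x' - ?x)" using g x' OD by (auto simp: subdiff_def)
    ultimately show ?thesis using xO Wx by simp
  qed
  have part2: "\<exists>y lam z. (\<exists>g\<in>subdiff ?D ?f (closest_point ?\<Omega> y).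
                 0 = - y + closest_point ?\<Omega> y - g + transpose ?WB *v lam \<and>
                 0 = ?d - ?WB *v closest_point ?\<Omega> y - ?L *v lam - ?L *v z \<and>
                 0 = ?L *v lam) \<and> xs = closest_point ?\<Omega> y"
    if xs: "xs \<in> ?\<Omega>" "?W xs = d0" and opt: "\<forall>x'\<in>?\<Omega>. ?W x' = d0 \<longrightarrow> ?f xs \<le> ?f x'" for xs
  proof -
    define K where "K = {x \<in> ?\<Omega>. ?W x = d0}"
    have "convex {x. ?W x = d0}" unfolding convex_def using Wlin
      by (auto simp: linear_add linear_scale simp flip: scaleR_add_left)
    then have cK: "convex K" unfolding K_def using cO by (simp add: Collect_conj_eq convex_Int)
    obtain g where g: "\<forall>z\<in>?D. ?f z \<ge> ?f xs + inner g (z - xs)" and gK: "\<forall>x\<in>K. inner g (x - xs) \<ge> 0"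
      using step1[OF oD cD f_conv[OF f_strict] cK _ _ _] xs opt OD unfolding K_def by blast
    obtain lam0 where lam0: "\<forall>x\<in>?\<Omega>. inner (g - transpose ?WB *v stack (\<lambda>_. lam0)) (x - xs) \<ge> 0"
      using step2[OF Wlin W_adj cO xs(1) x0(1), of g] x0(2) xs(2) gK unfolding K_def by auto
    define lam where "lam = stack (\<lambda>_::'n. lam0)"
    define y where "y = xs - g + transpose ?WB *v lam"
    have cp: "xs = closest_point ?\<Omega> y"
    proof (rule closest_point_unique[OF cO clO xs(1)], rule ballI)
      fix z assume z: "z \<in> ?\<Omega>"
      have yx: "y - xs = - (g - transpose ?WB *v lam)" by (simp add: y_def)
      have "0 \<le> inner (g - transpose ?WB *v lam) (z - xs)" using lam0 z unfolding lam_def by blast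
      then have h: "inner (y - xs) (z - xs) \<le> 0" unfolding yx inner_minus_left by simp
      have "inner (y - xs) (y - xs) \<le> inner (y - z) (y - z)"
      proof -
        have "y - z = (y - xs) - (z - xs)" by simp
        then have "inner (y - z) (y - z) = inner (y - xs) (y - xs) - 2 * inner (y - xs) (z - xs) + inner (z - xs) (z - xs)"
          by (simp only:) (simp add: inner_diff_left inner_diff_right inner_commute)
        moreover have "0 \<le> inner (z - xs) (z - xs)" by simp
        ultimately show ?thesis using h by linarith
      qed
      then show "dist y xs \<le> dist y z" by (simp add: dist_norm norm_le)
    qed
    have "bsum (?d - ?WB *v xs) = 0" using xs(2) by (simp add: bsum_diff bsum_stack bsum_WB d0_def)
    then obtain z where z: "?L *v z = ?d - ?WB *v xs" using L_range[OF sym nonneg conn] by blast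
    have Llam: "?L *v lam = 0" by (simp add: lam_def L_stack_const)
    have gs: "g \<in> subdiff ?D ?f xs" using g by (simp add: subdiff_def)
    show ?thesis
    proof (intro exI conjI)
      show "\<exists>g\<in>subdiff ?D ?f (closest_point ?\<Omega> y).
                 0 = - y + closest_point ?\<Omega> y - g + transpose ?WB *v lam \<and>
                 0 = ?d - ?WB *v closest_point ?\<Omega> y - ?L *v lam - ?L *v z \<and>
                 0 = ?L *v lam"
        unfolding cp[symmetric] using gs Llam z by (intro bexI[of _ g]) (auto simp: y_def)
    qed (rule cp)
  qed
  have x0O: "x0 \<in> ?\<Omega>" using x0(1) interior_subset by blast
  show ?thesis unfolding Let_def
  proof (rule conjI)
    show "\<forall>y lam z. (\<exists>g\<in>subdiff ?D ?f (closest_point ?\<Omega> y).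
                 0 = - y + closest_point ?\<Omega> y - g + transpose ?WB *v lam \<and>
                 0 = ?d - ?WB *v closest_point ?\<Omega> y - ?L *v lam - ?L *v z \<and>
                 0 = ?L *v lam) \<longrightarrow>
           (closest_point ?\<Omega> y \<in> ?\<Omega> \<and> ?W (closest_point ?\<Omega> y) = d0 \<and>
            (\<forall>x'\<in>?\<Omega>. ?W x' = d0 \<longrightarrow> ?f (closest_point ?\<Omega> y) \<le> ?f x'))"
    proof (intro allI impI)
      fix y lam z
      assume "\<exists>g\<in>subdiff ?D ?f (closest_point ?\<Omega> y).
                 0 = - y + closest_point ?\<Omega> y - g + transpose ?WB *v lam \<and>
                 0 = ?d - ?WB *v closest_point ?\<Omega> y - ?L *v lam - ?L *v z \<and>
                 0 = ?L *v lam"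
      then obtain g where gg: "g \<in> subdiff ?D ?f (closest_point ?\<Omega> y)"
        and ee: "0 = - y + closest_point ?\<Omega> y - g + transpose ?WB *v lam"
           "0 = ?d - ?WB *v closest_point ?\<Omega> y - ?L *v lam - ?L *v z" "0 = ?L *v lam" by blast
      show "closest_point ?\<Omega> y \<in> ?\<Omega> \<and> ?W (closest_point ?\<Omega> y) = d0 \<and>
            (\<forall>x'\<in>?\<Omega>. ?W x' = d0 \<longrightarrow> ?f (closest_point ?\<Omega> y) \<le> ?f x')"
        using part1[OF gg ee x0O x0(2)] part1[OF gg ee] by blast
    qed
  next
    show "\<forall>xs. xs \<in> ?\<Omega> \<and> ?W xs = d0 \<and> (\<forall>x'\<in>?\<Omega>. ?W x' = d0 \<longrightarrow> ?f xs \<le> ?f x') \<longrightarrow>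
      (\<exists>y lam z. (\<exists>g\<in>subdiff ?D ?f (closest_point ?\<Omega> y).
                 0 = - y + closest_point ?\<Omega> y - g + transpose ?WB *v lam \<and>
                 0 = ?d - ?WB *v closest_point ?\<Omega> y - ?L *v lam - ?L *v z \<and>
                 0 = ?L *v lam) \<and> xs = closest_point ?\<Omega> y)"
      using part2 by blast
  qed
qed

end
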